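(* Let $(t_1,s_1),(t_2,s_2)\in\mathbb{C}^\times\times\mathbb{C}^\times$ with $t_1\ne t_2$ and $s_1\neq s_2$, let $X_1=A_2(t_1,s_1)$, $X_2=A_2(t_2,s_2)$, $T=X_1+X_2$, and $\varepsilon_0=\det(X_1)+\det(X_2)-\det(X_1+X_2)$. Then for all $n\in\mathbb{N}$, $T^{2n}=(\varepsilon_0+2)^nI_2$ and $T^{2n+1}=(\varepsilon_0+2)^nT$.
   Context: $\mathbb{C}^\times=\mathbb{C}\setminus\{0\}$; $A_2(t,s)=\begin{pmatrix} t & s\\ \frac{1-t^2}{s} & -t\end{pmatrix}$; $I_2$ is the $2\times2$ identity matrix. *)

theory Defs
  imports "HOL-Analysis.Analysis"
begin

definition A2 :: "complex \<Rightarrow> complex \<Rightarrow> complex^2^2" where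
  "A2 t s = (\<chi> i j. if i = 1 then (if j = 1 then t else s)
                     else (if j = 1 then (1 - t^2) / s else - t))"

fun matpow :: "'a::comm_ring_1^'n^'n \<Rightarrow> nat \<Rightarrow> 'a^'n^'n" where
  "matpow A 0 = mat 1"
| "matpow A (Suc k) = A ** matpow A k"

end

theory Submission
  imports Defs
begin

lemma mat2_eq: "(A::complex^2^2) = B \<longleftrightarrow> A$1$1 = B$1$1 \<and> A$1$2 = B$1$2 \<and> A$2$1 = B$2$1 \<and> A$2$2 = B$2$2"
  by (auto simp: vec_eq_iff forall_2)

lemma mul2: "((A::complex^2^2) ** B)$i$j = A$i$1 * B$1$j + A$i$2 * B$2$j"
  by (simp add: matrix_matrix_mult_def sum_2)

lemma mat_comm2: "(A::complex^2^2) ** mat c = mat c ** A"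
  by (simp add: mat2_eq mul2 mat_def)

lemma mat_mat2: "mat a ** mat b = (mat (a*b) :: complex^2^2)"
  by (simp add: mat2_eq mul2 mat_def)

theorem mainTheorem13:
  fixes t1 s1 t2 s2 :: complex and n :: nat
  assumes "t1 \<noteq> 0" "s1 \<noteq> 0" "t2 \<noteq> 0" "s2 \<noteq> 0"
    and "t1 \<noteq> t2" "s1 \<noteq> s2"
  defines "X1 \<equiv> A2 t1 s1" and "X2 \<equiv> A2 t2 s2"
  defines "T \<equiv> X1 + X2"
  defines "\<epsilon>0 \<equiv> det X1 + det X2 - det (X1 + X2)"
  shows "matpow T (2 * n) = mat ((\<epsilon>0 + 2) ^ n)
       \<and> matpow T (2 * n + 1) = mat ((\<epsilon>0 + 2) ^ n) ** T"
proof -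
  have sq: "T ** T = mat (\<epsilon>0 + 2)"
    using assms(2,4)
    unfolding T_def \<epsilon>0_def X1_def X2_def
    by (simp add: mat2_eq mul2 mat_def det_2 A2_def field_simps power2_eq_square)
  have ev: "matpow T (2 * n) = mat ((\<epsilon>0 + 2) ^ n)"
  proof (induction n)
    case 0 then show ?case by simp
  next
    case (Suc n)
    have "matpow T (2 * Suc n) = T ** (T ** matpow T (2*n))" by simp
    also have "\<dots> = mat (\<epsilon>0 + 2) ** mat ((\<epsilon>0 + 2) ^ n)"
      by (simp add: matrix_mul_assoc sq Suc)
    finally show ?case by (simp add: mat_mat2)
  qed
  show ?thesis using ev by (simp add: mat_comm2)
qed

end
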